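(* Let $G$ be a structured quadratic-bilinear system given by $(\mathcal C,\mathcal K,\mathcal B,\mathcal N,\mathcal H)$ with structured generalized transfer functions, and $\widehat G$ the reduced-order system obtained by projection with $V,W\in\mathbb C^{n\times r}$ of full column rank. Let $\sigma_1,\sigma_2\in\mathbb C$ be such that $\mathcal C,\mathcal K,\mathcal B,\mathcal N$ can be evaluated at $\sigma_1,\sigma_2$, $\mathcal H$ at $(\sigma_1,\sigma_1)$, and $\mathcal K(\sigma_1),\mathcal K(\sigma_2)$ are invertible; assume $W^{\mathsf H}\mathcal K(\sigma_i)V$ is invertible for $i=1,2$. If $$\operatorname{span}(V)\supseteq\operatorname{span}\big(\mathcal K(\sigma_1)^{-1}\mathcal B(\sigma_1)\big),\qquad\operatorname{span}(W)\supseteq\operatorname{span}\big(\mathcal K(\sigma_2)^{-\mathsf H}\mathcal C(\sigma_2)^{\mathsf H}\big),$$ then $$G_1^{(B)}(\sigma_1)=\widehat G_1^{(B)}(\sigma_1),\quad G_1^{(B)}(\sigma_2)=\widehat G_1^{(B)}(\sigma_2),\quad G_2^{(N,(B))}(\sigma_1,\sigma_2)=\widehat G_2^{(N,(B))}(\sigma_1,\sigma_2),$$ $$G_3^{(H,(B),(B))}(\sigma_1,\sigma_1,\sigma_2)=\widehat G_3^{(H,(B),(B))}(\sigma_1,\sigma_1,\sigma_2).$$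
   Context: A structured quadratic-bilinear system (in frequency domain) with $n$ states, $m$ inputs and $p$ outputs is given by matrix-valued functions $\mathcal C:\mathbb C\to\mathbb C^{p\times n}$, $\mathcal K:\mathbb C\to\mathbb C^{n\times n}$, $\mathcal B:\mathbb C\to\mathbb C^{n\times m}$, $\mathcal N:\mathbb C\to\mathbb C^{n\times nm}$ with $\mathcal N(s)=[\mathcal N_1(s)\ \cdots\ \mathcal N_m(s)]$, $\mathcal N_j(s)\in\mathbb C^{n\times n}$, and $\mathcal H:\mathbb C\times\mathbb C\to\mathbb C^{n\times n^2}$. Its structured generalized transfer functions are $G_1^{(B)}(s_1)=\mathcal C(s_1)\mathcal K(s_1)^{-1}\mathcal B(s_1)$, $G_2^{(N,(B))}(s_1,s_2)=\mathcal C(s_2)\mathcal K(s_2)^{-1}\mathcal N(s_1)\big(I_m\otimes\mathcal K(s_1)^{-1}\mathcal B(s_1)\big)$, $G_3^{(H,(B),(B))}(s_1,s_2,s_3)=\mathcal C(s_3)\mathcal K(s_3)^{-1}\mathcal H(s_2,s_1)\big(\mathcal K(s_2)^{-1}\mathcal B(s_2)\otimes\mathcal K(s_1)^{-1}\mathcal B(s_1)\big)$, wherever the inverses exist; $\otimes$ is the Kronecker product. The reduced-order system obtained by projection with $V,W\in\mathbb C^{n\times r}$ is given by $\widehat{\mathcal C}(s)=\mathcal C(s)V$, $\widehat{\mathcal K}(s)=W^{\mathsf H}\mathcal K(s)V$, $\widehat{\mathcal B}(s)=W^{\mathsf H}\mathcal B(s)$, $\widehat{\mathcal N}(s)=W^{\mathsf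 H}\mathcal N(s)(I_m\otimes V)$, $\widehat{\mathcal H}(s_1,s_2)=W^{\mathsf H}\mathcal H(s_1,s_2)(V\otimes V)$, where $W^{\mathsf H}$ is the conjugate transpose and $\mathcal K(s)^{-\mathsf H}=(\mathcal K(s)^{-1})^{\mathsf H}$; its generalized transfer functions $\widehat G$ are defined by the same formulas with hatted functions. *)

theory Defs
  imports "HOL-Analysis.Analysis"
begin

text \<open>Dimensions are the cardinalities of finite index types; the Kronecker
  product uses product index types, ordered so that the first component is
  the (outer) block index.\<close>

definition kron :: "'a::times^'n^'m \<Rightarrow> 'a^'q^'p \<Rightarrow> 'a^('n \<times> 'q)^('m \<times> 'p)" where
  "kron A B = (\<chi> ik jl. A $ fst ik $ fst jl * B $ snd ik $ snd jl)"

definition ctrans :: "complex^'n^'m \<Rightarrow> complex^'m^'n" where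
  "ctrans A = (\<chi> i j. cnj (A $ j $ i))"

definition colspan :: "complex^'n^'m \<Rightarrow> (complex^'m) set" where
  "colspan A = vec.span (columns A)"

text \<open>Structured generalized transfer functions.  N(s) = [N_1(s) ... N_m(s)]
  is an n x nm matrix whose column index (j,k) is column k of block N_j(s).
  H(s1,s2) is n x n^2.\<close>

definition G1 :: "(complex \<Rightarrow> complex^'n^'p) \<Rightarrow> (complex \<Rightarrow> complex^'n^'n)
    \<Rightarrow> (complex \<Rightarrow> complex^'m^'n) \<Rightarrow> complex \<Rightarrow> complex^'m^'p" where
  "G1 C K B s1 = C s1 ** matrix_inv (K s1) ** B s1"

definition G2 :: "(complex \<Rightarrow> complex^'n^'p) \<Rightarrow> (complex \<Rightarrow> complex^'n^'n)
    \<Rightarrow> (complex \<Rightarrow> complex^'m^'n) \<Rightarrow> (complex \<Rightarrow> complex^('m \<times> 'n)^'n)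
    \<Rightarrow> complex \<Rightarrow> complex \<Rightarrow> complex^('m \<times> 'm)^'p" where
  "G2 C K B N s1 s2 =
     C s2 ** matrix_inv (K s2) ** N s1 ** kron (mat 1 :: complex^'m^'m) (matrix_inv (K s1) ** B s1)"

definition G3 :: "(complex \<Rightarrow> complex^'n^'p) \<Rightarrow> (complex \<Rightarrow> complex^'n^'n)
    \<Rightarrow> (complex \<Rightarrow> complex^'m^'n) \<Rightarrow> (complex \<Rightarrow> complex \<Rightarrow> complex^('n \<times> 'n)^'n)
    \<Rightarrow> complex \<Rightarrow> complex \<Rightarrow> complex \<Rightarrow> complex^('m \<times> 'm)^'p" where
  "G3 C K B H s1 s2 s3 =
     C s3 ** matrix_inv (K s3) ** H s2 s1 **
       kron (matrix_inv (K s2) ** B s2) (matrix_inv (K s1) ** B s1)"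

definition redC :: "(complex \<Rightarrow> complex^'n^'p) \<Rightarrow> complex^'r^'n \<Rightarrow> complex \<Rightarrow> complex^'r^'p" where
  "redC C V s = C s ** V"

definition redK :: "(complex \<Rightarrow> complex^'n^'n) \<Rightarrow> complex^'r^'n \<Rightarrow> complex^'r^'n
    \<Rightarrow> complex \<Rightarrow> complex^'r^'r" where
  "redK K V W s = ctrans W ** K s ** V"

definition redB :: "(complex \<Rightarrow> complex^'m^'n) \<Rightarrow> complex^'r^'n \<Rightarrow> complex \<Rightarrow> complex^'m^'r" where
  "redB B W s = ctrans W ** B s"

definition redN :: "(complex \<Rightarrow> complex^('m::finite \<times> 'n)^'n) \<Rightarrow> complex^'r^'n \<Rightarrow> complex^'r^'n
    \<Rightarrow> complex \<Rightarrow> complex^('m \<times> 'r)^'r" where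
  "redN N V W s = ctrans W ** N s ** kron (mat 1 :: complex^'m^'m) V"

definition redH :: "(complex \<Rightarrow> complex \<Rightarrow> complex^('n \<times> 'n)^'n) \<Rightarrow> complex^'r^'n \<Rightarrow> complex^'r^'n
    \<Rightarrow> complex \<Rightarrow> complex \<Rightarrow> complex^('r \<times> 'r)^'r" where
  "redH H V W s1 s2 = ctrans W ** H s1 s2 ** kron V V"

end

theory Submission
  imports Defs
begin

lemma inv_props:
  fixes A :: "complex^'n^'m"
  assumes "invertible A"
  shows "A ** matrix_inv A = mat 1" "matrix_inv A ** A = mat 1"
  using someI_ex[OF assms[unfolded invertible_def]] by (auto simp: matrix_inv_def)

lemma ctrans_mult: "ctrans (A ** B) = ctrans B ** ctrans (A::complex^'n^'m)"
  by (simp add: ctrans_def matrix_matrix_mult_def vec_eq_iff mult.commute)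

lemma ctrans_ctrans[simp]: "ctrans (ctrans A) = A"
  by (simp add: ctrans_def vec_eq_iff)

lemma kron_mult:
  fixes A :: "complex^'n^'m" and B :: "complex^'q^'p" and C :: "complex^'s^'n" and D :: "complex^'t^'q"
  shows "kron A B ** kron C D = kron (A ** C) (B ** D)"
  by (simp add: kron_def matrix_matrix_mult_def vec_eq_iff sum_product sum.cartesian_product
      case_prod_beta mult_ac)

lemma span_sub_range:
  fixes V :: "complex^'r^'n"
  shows "vec.span (columns V) \<subseteq> range ((*v) V)"
proof (rule vec.span_minimal)
  show "columns V \<subseteq> range ((*v) V)"
  proof
    fix x assume "x \<in> columns V"
    then obtain i where i: "x = column i V" by (auto simp: columns_def)
    have "V *v axis i 1 = column i V"
      by (simp add: column_def matrix_vector_mult_def axis_def vec_eq_iff if_distrib cong: if_cong)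
    then show "x \<in> range ((*v) V)" using i by (metis rangeI)
  qed
  show "vec.subspace (range ((*v) V))"
    unfolding vec.subspace_def
  proof (intro conjI ballI allI)
    show "0 \<in> range ((*v) V)" by (metis matrix_vector_mult_0_right rangeI)
  next
    fix x y assume "x \<in> range ((*v) V)" "y \<in> range ((*v) V)"
    then obtain a b where "x = V *v a" "y = V *v b" by auto
    then show "x + y \<in> range ((*v) V)" by (metis matrix_vector_right_distrib rangeI)
  next
    fix c :: complex and x assume "x \<in> range ((*v) V)"
    then obtain a where "x = V *v a" by auto
    then have "c *s x = V *v (c *s a)"
      by (simp add: matrix_vector_mult_def vec_eq_iff sum_distrib_left mult_ac)
    then show "c *s x \<in> range ((*v) V)" by auto
  qed
qed

lemma colspan_factor:
  fixes A :: "complex^'k^'n" and V :: "complex^'r^'n"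
  assumes "colspan A \<subseteq> colspan V"
  shows "\<exists>Y. A = V ** Y"
proof -
  have "\<forall>j. \<exists>y. column j A = V *v y"
  proof
    fix j
    have "column j A \<in> colspan A" unfolding colspan_def
      by (rule vec.span_base) (auto simp: columns_def)
    then have "column j A \<in> range ((*v) V)" using assms span_sub_range[of V] unfolding colspan_def by blast
    then show "\<exists>y. column j A = V *v y" by auto
  qed
  then obtain y where y: "\<And>j. column j A = V *v y j" by metis
  define Y where "Y = (\<chi> i j. y j $ i)"
  have "A = V ** Y"
  proof -
    have "A $ i $ j = (V ** Y) $ i $ j" for i j
    proof -
      have "A $ i $ j = column j A $ i" by (simp add: column_def)
      also have "\<dots> = (V *v y j) $ i" by (simp add: y)
      finally show ?thesis by (simp add: matrix_vector_mult_def matrix_matrix_mult_def Y_def)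
    qed
    then show ?thesis by (simp add: vec_eq_iff)
  qed
  then show ?thesis by blast
qed

theorem corollary4p5:
  fixes C :: "complex \<Rightarrow> complex^'n^'p"
    and K :: "complex \<Rightarrow> complex^'n^'n"
    and B :: "complex \<Rightarrow> complex^'m^'n"
    and N :: "complex \<Rightarrow> complex^('m \<times> 'n)^'n"
    and H :: "complex \<Rightarrow> complex \<Rightarrow> complex^('n \<times> 'n)^'n"
    and V W :: "complex^'r^'n"
    and \<sigma>1 \<sigma>2 :: complex
  assumes rankV: "rank V = CARD('r)"
    and rankW: "rank W = CARD('r)"
    and invK1: "invertible (K \<sigma>1)"
    and invK2: "invertible (K \<sigma>2)"
    and invKr1: "invertible (ctrans W ** K \<sigma>1 ** V)"
    and invKr2: "invertible (ctrans W ** K \<sigma>2 ** V)"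
    and spanV: "colspan (matrix_inv (K \<sigma>1) ** B \<sigma>1) \<subseteq> colspan V"
    and spanW: "colspan (ctrans (matrix_inv (K \<sigma>2)) ** ctrans (C \<sigma>2)) \<subseteq> colspan W"
  shows "G1 C K B \<sigma>1 = G1 (redC C V) (redK K V W) (redB B W) \<sigma>1 \<and>
         G1 C K B \<sigma>2 = G1 (redC C V) (redK K V W) (redB B W) \<sigma>2 \<and>
         G2 C K B N \<sigma>1 \<sigma>2 = G2 (redC C V) (redK K V W) (redB B W) (redN N V W) \<sigma>1 \<sigma>2 \<and>
         G3 C K B H \<sigma>1 \<sigma>1 \<sigma>2 = G3 (redC C V) (redK K V W) (redB B W) (redH H V W) \<sigma>1 \<sigma>1 \<sigma>2"
  proof -
  define K1 where "K1 = K \<sigma>1"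
  define K2 where "K2 = K \<sigma>2"
  define Kr1 where "Kr1 = ctrans W ** K1 ** V"
  define Kr2 where "Kr2 = ctrans W ** K2 ** V"
  obtain Y where Y: "matrix_inv K1 ** B \<sigma>1 = V ** Y"
    using colspan_factor[OF spanV] K1_def by blast
  obtain U where U: "ctrans (matrix_inv K2) ** ctrans (C \<sigma>2) = W ** U"
    using colspan_factor[OF spanW] K2_def by blast
  define Q where "Q = ctrans U"
  have i1: "K1 ** matrix_inv K1 = mat 1" "matrix_inv K1 ** K1 = mat 1"
    using inv_props[OF invK1] K1_def by auto
  have i2: "K2 ** matrix_inv K2 = mat 1" "matrix_inv K2 ** K2 = mat 1"
    using inv_props[OF invK2] K2_def by auto
  have ir1: "Kr1 ** matrix_inv Kr1 = mat 1" "matrix_inv Kr1 ** Kr1 = mat 1"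
    using inv_props[OF invKr1] Kr1_def K1_def by auto
  have ir2: "Kr2 ** matrix_inv Kr2 = mat 1" "matrix_inv Kr2 ** Kr2 = mat 1"
    using inv_props[OF invKr2] Kr2_def K2_def by auto
  have B1: "B \<sigma>1 = K1 ** (V ** Y)"
    by (metis Y i1(1) matrix_mul_assoc matrix_mul_lid)
  have key1: "matrix_inv Kr1 ** (ctrans W ** B \<sigma>1) = Y"
  proof -
    have "ctrans W ** B \<sigma>1 = Kr1 ** Y" by (simp add: B1 Kr1_def matrix_mul_assoc)
    then show ?thesis by (simp add: matrix_mul_assoc ir1)
  qed
  have CK2: "C \<sigma>2 ** matrix_inv K2 = Q ** ctrans W"
    using arg_cong[OF U, of ctrans] by (simp add: ctrans_mult Q_def)
  have C2: "C \<sigma>2 = Q ** ctrans W ** K2"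
    by (metis CK2 i2(2) matrix_mul_assoc matrix_mul_rid)
  have key2: "C \<sigma>2 ** V ** matrix_inv Kr2 = Q"
  proof -
    have "C \<sigma>2 ** V = Q ** Kr2" by (simp add: C2 Kr2_def matrix_mul_assoc)
    then show ?thesis by (simp add: ir2 flip: matrix_mul_assoc)
  qed
  have red1: "matrix_inv (redK K V W \<sigma>1) ** redB B W \<sigma>1 = Y"
    using key1 by (simp add: redK_def redB_def Kr1_def K1_def)
  have red2: "redC C V \<sigma>2 ** matrix_inv (redK K V W \<sigma>2) = Q"
    using key2 by (simp add: redC_def redK_def Kr2_def K2_def)
  have g1: "G1 C K B \<sigma>1 = G1 (redC C V) (redK K V W) (redB B W) \<sigma>1"
  proof -
    have "G1 (redC C V) (redK K V W) (redB B W) \<sigma>1 = C \<sigma>1 ** V ** Y"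
      using red1 by (simp add: G1_def redC_def flip: matrix_mul_assoc)
    also have "\<dots> = C \<sigma>1 ** (matrix_inv K1 ** B \<sigma>1)" by (simp add: Y matrix_mul_assoc)
    finally show ?thesis by (simp add: G1_def K1_def matrix_mul_assoc)
  qed
  have g2: "G1 C K B \<sigma>2 = G1 (redC C V) (redK K V W) (redB B W) \<sigma>2"
  proof -
    have "G1 (redC C V) (redK K V W) (redB B W) \<sigma>2 = Q ** (ctrans W ** B \<sigma>2)"
      using red2 by (simp add: G1_def redB_def)
    also have "\<dots> = C \<sigma>2 ** matrix_inv K2 ** B \<sigma>2" by (simp add: CK2 matrix_mul_assoc)
    finally show ?thesis by (simp add: G1_def K2_def)
  qed
  have g3: "G2 C K B N \<sigma>1 \<sigma>2 = G2 (redC C V) (redK K V W) (redB B W) (redN N V W) \<sigma>1 \<sigma>2"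
  proof -
    have "G2 (redC C V) (redK K V W) (redB B W) (redN N V W) \<sigma>1 \<sigma>2
        = Q ** (ctrans W ** N \<sigma>1 ** (kron (mat 1 :: complex^'m^'m) V ** kron (mat 1 :: complex^'m^'m) Y))"
      using red1 red2 by (simp add: G2_def redN_def matrix_mul_assoc)
    also have "\<dots> = Q ** ctrans W ** N \<sigma>1 ** kron (mat 1 :: complex^'m^'m) (V ** Y)"
      by (simp add: kron_mult matrix_mul_assoc)
    also have "\<dots> = C \<sigma>2 ** matrix_inv K2 ** N \<sigma>1 ** kron (mat 1 :: complex^'m^'m) (matrix_inv K1 ** B \<sigma>1)"
      by (simp add: CK2 Y)
    finally show ?thesis by (simp add: G2_def K1_def K2_def)
  qed
  have g4: "G3 C K B H \<sigma>1 \<sigma>1 \<sigma>2 = G3 (redC C V) (redK K V W) (redB B W) (redH H V W) \<sigma>1 \<sigma>1 \<sigma>2"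
  proof -
    have "G3 (redC C V) (redK K V W) (redB B W) (redH H V W) \<sigma>1 \<sigma>1 \<sigma>2
        = Q ** (ctrans W ** H \<sigma>1 \<sigma>1 ** (kron V V ** kron Y Y))"
      using red1 red2 by (simp add: G3_def redH_def matrix_mul_assoc)
    also have "\<dots> = Q ** ctrans W ** H \<sigma>1 \<sigma>1 ** kron (V ** Y) (V ** Y)"
      by (simp add: kron_mult matrix_mul_assoc)
    also have "\<dots> = C \<sigma>2 ** matrix_inv K2 ** H \<sigma>1 \<sigma>1 ** kron (matrix_inv K1 ** B \<sigma>1) (matrix_inv K1 ** B \<sigma>1)"
      by (simp add: CK2 Y)
    finally show ?thesis by (simp add: G3_def K1_def K2_def)
  qed
  show ?thesis using g1 g2 g3 g4 by blast
qed

end
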